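(* The number of cyclic parking functions of length $n$ is $|\mathrm{CycPF}_n|=\sum_{i=0}^{n-1} i!\,(n-i)!$.
   Context: A parking preference is $p\in[n]^n$. Classical parking process: cars $1,\dots,n$ enter in order into spots $1,\dots,n$, initially unoccupied; car $i$ parks in the first unoccupied spot $k\ge p_i$ and fails if none. A classical parking function is a $p$ for which all cars park; its outcome is the permutation $\pi$ (one-line notation) with $\pi_k$ the car in spot $k$. For $i\in[n]$, $\mathrm{Inc}_i^n:=i(i+1)\cdots n\,12\cdots(i-1)$. A cyclic parking function is a classical parking function whose outcome equals $\mathrm{Inc}_i^n$ for some $i\in[n]$; $\mathrm{CycPF}_n$ is the set of these. *)

theory Defs
  imports Main
begin

text \<open>Spots and cars are numbered 1..n. A parking preference of length n is a list p
  with length n and entries in {1..n}; car i (1-based) has preference p ! (i-1).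
  The state of the lot is a map from spots to the car parked there (if any).\<close>

definition first_free :: "nat \<Rightarrow> (nat \<Rightarrow> nat option) \<Rightarrow> nat \<Rightarrow> nat option" where
  "first_free n occ a =
     (if \<exists>k. a \<le> k \<and> k \<le> n \<and> occ k = None
      then Some (LEAST k. a \<le> k \<and> k \<le> n \<and> occ k = None) else None)"

fun park_from :: "nat \<Rightarrow> nat \<Rightarrow> (nat \<Rightarrow> nat option) \<Rightarrow> nat list \<Rightarrow> (nat \<Rightarrow> nat option) option" where
  "park_from n i occ [] = Some occ"
| "park_from n i occ (a # ps) =
     (case first_free n occ a of
        None \<Rightarrow> None
      | Some k \<Rightarrow> park_from n (Suc i) (occ(k \<mapsto> i)) ps)"

definition park :: "nat \<Rightarrow> nat list \<Rightarrow> (nat \<Rightarrow> nat option) option" where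
  "park n p = park_from n 1 (\<lambda>_. None) p"

definition parking_preferences :: "nat \<Rightarrow> nat list set" where
  "parking_preferences n = {p. length p = n \<and> set p \<subseteq> {1..n}}"

definition is_parking_function :: "nat \<Rightarrow> nat list \<Rightarrow> bool" where
  "is_parking_function n p \<longleftrightarrow> p \<in> parking_preferences n \<and> park n p \<noteq> None"

text \<open>Outcome in one-line notation: the k-th entry is the car in spot k.\<close>
definition outcome :: "nat \<Rightarrow> nat list \<Rightarrow> nat list" where
  "outcome n p = map (\<lambda>k. the (the (park n p) k)) [1..<Suc n]"

definition Inc :: "nat \<Rightarrow> nat \<Rightarrow> nat list" where
  "Inc n i = [i..<Suc n] @ [1..<i]"

definition CycPF :: "nat \<Rightarrow> nat list set" where
  "CycPF n = {p. is_parking_function n p \<and> (\<exists>i\<in>{1..n}. outcome n p = Inc n i)}"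

end

theory Submission
  imports Defs
begin

definition carI :: "nat \<Rightarrow> nat \<Rightarrow> nat \<Rightarrow> nat" where
  "carI n i k = (if k \<le> n - i + 1 then k + i - 1 else k - (n - i + 1))"
definition spotI :: "nat \<Rightarrow> nat \<Rightarrow> nat \<Rightarrow> nat" where
  "spotI n i c = (if i \<le> c then c - i + 1 else c + (n - i + 1))"
definition occI :: "nat \<Rightarrow> nat \<Rightarrow> nat \<Rightarrow> nat \<Rightarrow> nat option" where
  "occI n i j = (\<lambda>k. if 1 \<le> k \<and> k \<le> n \<and> carI n i k < j then Some (carI n i k) else None)"

lemma carI_range: "1 \<le> i \<Longrightarrow> i \<le> n \<Longrightarrow> 1 \<le> k \<Longrightarrow> k \<le> n \<Longrightarrow> 1 \<le> carI n i k \<and> carI n i k \<le> n"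
  by (simp add: carI_def; arith)
lemma spotI_range: "1 \<le> i \<Longrightarrow> i \<le> n \<Longrightarrow> 1 \<le> c \<Longrightarrow> c \<le> n \<Longrightarrow> 1 \<le> spotI n i c \<and> spotI n i c \<le> n"
  by (simp add: spotI_def; arith)
lemma carI_spotI: "1 \<le> i \<Longrightarrow> i \<le> n \<Longrightarrow> 1 \<le> c \<Longrightarrow> c \<le> n \<Longrightarrow> carI n i (spotI n i c) = c"
  by (simp add: spotI_def carI_def; arith)
lemma spotI_carI: "1 \<le> i \<Longrightarrow> i \<le> n \<Longrightarrow> 1 \<le> k \<Longrightarrow> k \<le> n \<Longrightarrow> spotI n i (carI n i k) = k"
  by (simp add: spotI_def carI_def; arith)

lemma ff_iff: "first_free n occ a = Some s \<longleftrightarrow>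
   (a \<le> s \<and> s \<le> n \<and> occ s = None \<and> (\<forall>k. a \<le> k \<and> k < s \<longrightarrow> occ k \<noteq> None))"
proof
  assume h: "first_free n occ a = Some s"
  then have ex: "\<exists>k. a \<le> k \<and> k \<le> n \<and> occ k = None" and
    s: "s = (LEAST k. a \<le> k \<and> k \<le> n \<and> occ k = None)"
    by (auto simp: first_free_def split: if_splits)
  from ex obtain k where "a \<le> k \<and> k \<le> n \<and> occ k = None" by blast
  then have "a \<le> s \<and> s \<le> n \<and> occ s = None" unfolding s by (rule LeastI)
  moreover have "\<forall>k. a \<le> k \<and> k < s \<longrightarrow> occ k \<noteq> None"
  proof (intro allI impI)
    fix k assume k: "a \<le> k \<and> k < s"
    show "occ k \<noteq> None"
    proof
      assume "occ k = None"
      with k \<open>a \<le> s \<and> s \<le> n \<and> occ s = None\<close> have "s \<le> k" unfolding s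
        by (intro Least_le) auto
      with k show False by simp
    qed
  qed
  ultimately show "a \<le> s \<and> s \<le> n \<and> occ s = None \<and> (\<forall>k. a \<le> k \<and> k < s \<longrightarrow> occ k \<noteq> None)" by blast
next
  assume h: "a \<le> s \<and> s \<le> n \<and> occ s = None \<and> (\<forall>k. a \<le> k \<and> k < s \<longrightarrow> occ k \<noteq> None)"
  have "(LEAST k. a \<le> k \<and> k \<le> n \<and> occ k = None) = s"
    by (rule Least_equality) (use h in \<open>auto simp: not_less[symmetric]\<close>)
  with h show "first_free n occ a = Some s" unfolding first_free_def by auto
qed

lemma park_mono: "park_from n i occ ps = Some occ' \<Longrightarrow> occ k = Some c \<Longrightarrow> occ' k = Some c"
proof (induction ps arbitrary: i occ)
  case Nil then show ?case by simp
next
  case (Cons a ps)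
  then obtain s where s: "first_free n occ a = Some s" and r: "park_from n (Suc i) (occ(s \<mapsto> i)) ps = Some occ'"
    by (auto split: option.splits)
  from s have "occ s = None" by (simp add: ff_iff)
  with Cons.prems(2) have "(occ(s \<mapsto> i)) k = Some c" by auto
  with Cons.IH r show ?case by blast
qed

lemma occI_upd: "1 \<le> i \<Longrightarrow> i \<le> n \<Longrightarrow> 1 \<le> j \<Longrightarrow> j \<le> n \<Longrightarrow>
  (occI n i j)(spotI n i j \<mapsto> j) = occI n i (Suc j)"
proof
  fix k assume a: "1 \<le> i" "i \<le> n" "1 \<le> j" "j \<le> n"
  show "((occI n i j)(spotI n i j \<mapsto> j)) k = occI n i (Suc j) k"
  proof (cases "k = spotI n i j")
    case True then show ?thesis using a spotI_range[of i n j] carI_spotI[of i n j]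
      by (auto simp: occI_def)
  next
    case False
    have "1 \<le> k \<Longrightarrow> k \<le> n \<Longrightarrow> carI n i k \<noteq> j" using False spotI_carI[OF a(1,2), of k] by auto
    then show ?thesis using False by (auto simp: occI_def)
  qed
qed

lemma occI_1: "1 \<le> i \<Longrightarrow> i \<le> n \<Longrightarrow> occI n i 1 = (\<lambda>_. None)"
  using carI_range by (fastforce simp: occI_def)

lemma key:
  assumes i: "1 \<le> i" "i \<le> n"
  shows "1 \<le> j \<Longrightarrow> j + length ps = Suc n \<Longrightarrow> \<forall>x\<in>set ps. 1 \<le> x \<Longrightarrow>
    (\<exists>occ'. park_from n j (occI n i j) ps = Some occ' \<and> (\<forall>k. 1 \<le> k \<and> k \<le> n \<longrightarrow> the (occ' k) = carI n i k))
    \<longleftrightarrow> (\<forall>t<length ps. first_free n (occI n i (j+t)) (ps!t) = Some (spotI n i (j+t)))"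
proof (induction ps arbitrary: j)
  case Nil
  then have "j = Suc n" by simp
  then show ?case using carI_range[OF i] by (fastforce simp: occI_def less_Suc_eq_le)
next
  case (Cons a ps)
  have jn: "j \<le> n" using Cons.prems by simp
  have IH: "(\<exists>occ'. park_from n (Suc j) (occI n i (Suc j)) ps = Some occ' \<and> (\<forall>k. 1 \<le> k \<and> k \<le> n \<longrightarrow> the (occ' k) = carI n i k))
    \<longleftrightarrow> (\<forall>t<length ps. first_free n (occI n i (Suc j+t)) (ps!t) = Some (spotI n i (Suc j+t)))"
    using Cons.IH[of "Suc j"] Cons.prems by simp
  have upd: "(occI n i j)(spotI n i j \<mapsto> j) = occI n i (Suc j)"
    using occI_upd[OF i Cons.prems(1) jn] .
  have R: "(\<forall>t<length (a#ps). first_free n (occI n i (j+t)) ((a#ps)!t) = Some (spotI n i (j+t)))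
     \<longleftrightarrow> first_free n (occI n i j) a = Some (spotI n i j) \<and>
         (\<forall>t<length ps. first_free n (occI n i (Suc j+t)) (ps!t) = Some (spotI n i (Suc j+t)))"
    (is "?A \<longleftrightarrow> ?B")
  proof
    assume A: ?A
    have "first_free n (occI n i j) a = Some (spotI n i j)" using A[rule_format, of 0] by simp
    moreover have "\<forall>t<length ps. first_free n (occI n i (Suc j+t)) (ps!t) = Some (spotI n i (Suc j+t))"
    proof (intro allI impI)
      fix t assume "t < length ps"
      then show "first_free n (occI n i (Suc j+t)) (ps!t) = Some (spotI n i (Suc j+t))"
        using A[rule_format, of "Suc t"] by simp
    qed
    ultimately show ?B by blast
  next
    assume ?B
    then show ?A by (auto simp: less_Suc_eq_0_disj)
  qed
  show ?case
  proof
    assume L: "\<exists>occ'. park_from n j (occI n i j) (a # ps) = Some occ' \<and> (\<forall>k. 1 \<le> k \<and> k \<le> n \<longrightarrow> the (occ' k) = carI n i k)"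
    then obtain occ' where o1: "park_from n j (occI n i j) (a # ps) = Some occ'"
      and o2: "\<forall>k. 1 \<le> k \<and> k \<le> n \<longrightarrow> the (occ' k) = carI n i k" by blast
    from o1 obtain s where s: "first_free n (occI n i j) a = Some s"
      and r: "park_from n (Suc j) ((occI n i j)(s \<mapsto> j)) ps = Some occ'"
      by (auto split: option.splits)
    have "occ' s = Some j" by (rule park_mono[OF r]) simp
    have sr: "1 \<le> s \<and> s \<le> n" using s Cons.prems(3) by (auto simp: ff_iff occI_def)
    have "carI n i s = j" using o2 sr \<open>occ' s = Some j\<close> by auto
    then have "s = spotI n i j" using spotI_carI[OF i, of s] sr by simp
    then show "\<forall>t<length (a#ps). first_free n (occI n i (j+t)) ((a#ps)!t) = Some (spotI n i (j+t))"
      using R IH s r o2 upd by auto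
  next
    assume "\<forall>t<length (a#ps). first_free n (occI n i (j+t)) ((a#ps)!t) = Some (spotI n i (j+t))"
    then have B: "first_free n (occI n i j) a = Some (spotI n i j)" and
      C: "\<forall>t<length ps. first_free n (occI n i (Suc j+t)) (ps!t) = Some (spotI n i (Suc j+t))"
      using R by auto
    from C IH obtain occ' where "park_from n (Suc j) (occI n i (Suc j)) ps = Some occ' \<and> (\<forall>k. 1 \<le> k \<and> k \<le> n \<longrightarrow> the (occ' k) = carI n i k)"
      by blast
    then show "\<exists>occ'. park_from n j (occI n i j) (a # ps) = Some occ' \<and> (\<forall>k. 1 \<le> k \<and> k \<le> n \<longrightarrow> the (occ' k) = carI n i k)"
      using B upd by auto
  qed
qed

lemma Inc_len: "1 \<le> i \<Longrightarrow> i \<le> n \<Longrightarrow> length (Inc n i) = n"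
  by (simp add: Inc_def)

lemma Inc_nth: "1 \<le> i \<Longrightarrow> i \<le> n \<Longrightarrow> k < n \<Longrightarrow> Inc n i ! k = carI n i (Suc k)"
  by (auto simp: Inc_def carI_def nth_append)

lemma outcome_iff:
  assumes i: "1 \<le> i" "i \<le> n"
  shows "outcome n p = Inc n i \<longleftrightarrow> (\<forall>k. 1 \<le> k \<and> k \<le> n \<longrightarrow> the (the (park n p) k) = carI n i k)"
proof -
  have "outcome n p = Inc n i \<longleftrightarrow> (\<forall>k<n. the (the (park n p) (Suc k)) = carI n i (Suc k))"
    by (simp add: list_eq_iff_nth_eq outcome_def Inc_len[OF i] Inc_nth[OF i] nth_upt del: upt_Suc)
  also have "\<dots> \<longleftrightarrow> (\<forall>k. 1 \<le> k \<and> k \<le> n \<longrightarrow> the (the (park n p) k) = carI n i k)"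
  proof
    assume h: "\<forall>k<n. the (the (park n p) (Suc k)) = carI n i (Suc k)"
    show "\<forall>k. 1 \<le> k \<and> k \<le> n \<longrightarrow> the (the (park n p) k) = carI n i k"
    proof (intro allI impI)
      fix k assume "1 \<le> k \<and> k \<le> n"
      then obtain m where "k = Suc m" "m < n" by (cases k) auto
      then show "the (the (park n p) k) = carI n i k" using h by simp
    qed
  qed auto
  finally show ?thesis .
qed

lemma cyc_char:
  assumes i: "1 \<le> i" "i \<le> n" and p: "length p = n" "\<forall>x\<in>set p. 1 \<le> x"
  shows "(park n p \<noteq> None \<and> outcome n p = Inc n i) \<longleftrightarrow>
     (\<forall>t<n. first_free n (occI n i (Suc t)) (p!t) = Some (spotI n i (Suc t)))"
proof -
  have K: "(\<exists>occ'. park_from n 1 (occI n i 1) p = Some occ' \<and> (\<forall>k. 1 \<le> k \<and> k \<le> n \<longrightarrow> the (occ' k) = carI n i k))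
    \<longleftrightarrow> (\<forall>t<length p. first_free n (occI n i (1+t)) (p!t) = Some (spotI n i (1+t)))"
    using key[OF i, of 1 p] p by simp
  have "(park n p \<noteq> None \<and> outcome n p = Inc n i) \<longleftrightarrow>
    (\<exists>occ'. park_from n 1 (occI n i 1) p = Some occ' \<and> (\<forall>k. 1 \<le> k \<and> k \<le> n \<longrightarrow> the (occ' k) = carI n i k))"
    unfolding outcome_iff[OF i] occI_1[OF i] park_def by auto
  with K p show ?thesis by simp
qed

definition AI :: "nat \<Rightarrow> nat \<Rightarrow> nat \<Rightarrow> nat set" where
  "AI n i j = {a. 1 \<le> a \<and> a \<le> n \<and> first_free n (occI n i j) a = Some (spotI n i j)}"

lemma card_lists: "card {xs. length xs = n \<and> (\<forall>t<n. xs!t \<in> B t)} = (\<Prod>t<n. card (B t))"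
proof (induction n arbitrary: B)
  case 0
  then show ?case by simp
next
  case (Suc n)
  have eq: "{xs. length xs = Suc n \<and> (\<forall>t<Suc n. xs!t \<in> B t)} =
    (\<lambda>(x,xs). x#xs) ` (B 0 \<times> {xs. length xs = n \<and> (\<forall>t<n. xs!t \<in> B (Suc t))})"
  proof (intro set_eqI iffI)
    fix xs assume "xs \<in> {xs. length xs = Suc n \<and> (\<forall>t<Suc n. xs!t \<in> B t)}"
    then have h: "length xs = Suc n" "\<forall>t<Suc n. xs!t \<in> B t" by auto
    then obtain y ys where xs: "xs = y # ys" by (cases xs) auto
    have "y \<in> B 0" using h(2)[rule_format, of 0] xs by simp
    moreover have "\<forall>t<n. ys!t \<in> B (Suc t)" using h xs by auto
    ultimately show "xs \<in> (\<lambda>(x,xs). x#xs) ` (B 0 \<times> {xs. length xs = n \<and> (\<forall>t<n. xs!t \<in> B (Suc t))})"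
      using h(1) xs by force
  next
    fix xs assume "xs \<in> (\<lambda>(x,xs). x#xs) ` (B 0 \<times> {xs. length xs = n \<and> (\<forall>t<n. xs!t \<in> B (Suc t))})"
    then show "xs \<in> {xs. length xs = Suc n \<and> (\<forall>t<Suc n. xs!t \<in> B t)}"
      by (auto simp: less_Suc_eq_0_disj)
  qed
  have inj: "inj_on (\<lambda>(x,xs). x#xs) (B 0 \<times> {xs. length xs = n \<and> (\<forall>t<n. xs!t \<in> B (Suc t))})"
    by (auto simp: inj_on_def)
  show ?case unfolding eq card_image[OF inj] card_cartesian_product Suc.IH
    by (simp add: prod.lessThan_Suc_shift del: prod.lessThan_Suc)
qed

lemma occI_None_iff: "occI n i j k \<noteq> None \<longleftrightarrow> 1 \<le> k \<and> k \<le> n \<and> carI n i k < j"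
  by (simp add: occI_def)

lemma card_AI:
  assumes i: "1 \<le> i" "i \<le> n" and j: "1 \<le> j" "j \<le> n"
  shows "card (AI n i j) = (if j < i then j else j - i + 1)"
proof (cases "j < i")
  case True
  have s: "spotI n i j = j + (n - i + 1)" using True by (simp add: spotI_def)
  have "AI n i j = {n - i + 2 .. j + (n - i + 1)}"
  proof (intro set_eqI iffI)
    fix a assume "a \<in> AI n i j"
    then have a: "1 \<le> a" "a \<le> n" "a \<le> j + (n - i + 1)"
      "\<forall>k. a \<le> k \<and> k < j + (n - i + 1) \<longrightarrow> occI n i j k \<noteq> None"
      unfolding AI_def ff_iff s by auto
    have "n - i + 2 \<le> a"
    proof (rule ccontr)
      assume "\<not> n - i + 2 \<le> a"
      then have "a \<le> n - i + 1" by simp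
      then have "occI n i j (n - i + 1) \<noteq> None" using a(4) j by auto
      moreover have "carI n i (n - i + 1) = n" using i by (simp add: carI_def)
      ultimately show False using j by (simp add: occI_def split: if_splits)
    qed
    then show "a \<in> {n - i + 2 .. j + (n - i + 1)}" using a by simp
  next
    fix a assume a: "a \<in> {n - i + 2 .. j + (n - i + 1)}"
    have c1: "carI n i (j + (n - i + 1)) = j" using i j True by (simp add: carI_def)
    have c2: "\<forall>k. a \<le> k \<and> k < j + (n - i + 1) \<longrightarrow> occI n i j k \<noteq> None"
    proof (intro allI impI)
      fix k assume k: "a \<le> k \<and> k < j + (n - i + 1)"
      then have "carI n i k = k - (n - i + 1)" using a by (simp add: carI_def)
      then show "occI n i j k \<noteq> None" using k a True i by (simp add: occI_def; arith)
    qed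
    show "a \<in> AI n i j" unfolding AI_def ff_iff s using a c1 c2 True i
      by (auto simp: occI_def)
  qed
  then show ?thesis using True by simp
next
  case False
  have s: "spotI n i j = j - i + 1" using False by (simp add: spotI_def)
  have "AI n i j = {1 .. j - i + 1}"
  proof (intro set_eqI iffI)
    fix a assume "a \<in> AI n i j"
    then show "a \<in> {1 .. j - i + 1}" unfolding AI_def ff_iff s by auto
  next
    fix a assume a: "a \<in> {1 .. j - i + 1}"
    have c1: "carI n i (j - i + 1) = j" using i j False by (simp add: carI_def)
    have c2: "\<forall>k. a \<le> k \<and> k < j - i + 1 \<longrightarrow> occI n i j k \<noteq> None"
    proof (intro allI impI)
      fix k assume k: "a \<le> k \<and> k < j - i + 1"
      then have "carI n i k = k + i - 1" using a i j False by (simp add: carI_def; arith)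
      then show "occI n i j k \<noteq> None" using k a False i j by (simp add: occI_def; arith)
    qed
    show "a \<in> AI n i j" unfolding AI_def ff_iff s using a c1 c2 False i j
      by (auto simp: occI_def)
  qed
  then show ?thesis using False by simp
qed

lemma prod_Suc_fact: "(\<Prod>t<m. Suc t) = fact m"
  by (induction m) (simp_all add: fact_Suc)

lemma prod_AI:
  assumes i: "1 \<le> i" and n: "i - 1 \<le> n"
  shows "(\<Prod>t<n. (if Suc t < i then Suc t else Suc t - i + 1)) = fact (i - 1) * fact (Suc n - i)"
  using n
proof (induction n rule: dec_induct)
  case base
  have "(\<Prod>t<i-1. (if Suc t < i then Suc t else Suc t - i + 1)) = (\<Prod>t<i-1. Suc t)"
    by (rule prod.cong) auto
  then show ?case using i by (simp add: prod_Suc_fact)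
next
  case (step m)
  have e: "Suc (Suc m) - i = Suc (Suc m - i)" using step(1) i by simp
  have ns: "\<not> Suc m < i" using step(1) by arith
  show ?case using step e i ns by (simp add: fact_Suc algebra_simps)
qed

definition CI :: "nat \<Rightarrow> nat \<Rightarrow> nat list set" where
  "CI n i = {p. length p = n \<and> (\<forall>t<n. p!t \<in> AI n i (Suc t))}"

lemma CI_outcome:
  assumes i: "1 \<le> i" "i \<le> n" and p: "p \<in> CI n i"
  shows "is_parking_function n p \<and> outcome n p = Inc n i"
proof -
  have l: "length p = n" and h: "\<forall>t<n. p!t \<in> AI n i (Suc t)" using p by (auto simp: CI_def)
  have sp: "set p \<subseteq> {1..n}"
  proof
    fix x assume "x \<in> set p"
    then obtain t where "t < n" "p!t = x" using l by (auto simp: in_set_conv_nth)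
    then show "x \<in> {1..n}" using h by (auto simp: AI_def)
  qed
  have "\<forall>t<n. first_free n (occI n i (Suc t)) (p!t) = Some (spotI n i (Suc t))"
    using h by (auto simp: AI_def)
  then have "park n p \<noteq> None \<and> outcome n p = Inc n i"
    using cyc_char[OF i l] sp by (metis atLeastAtMost_iff subsetD)
  then show ?thesis using l sp by (simp add: is_parking_function_def parking_preferences_def)
qed

lemma CycPF_UN: "CycPF n = (\<Union>i\<in>{1..n}. CI n i)"
proof (intro set_eqI iffI)
  fix p assume "p \<in> CycPF n"
  then obtain i where i: "1 \<le> i" "i \<le> n" and pf: "is_parking_function n p" and o: "outcome n p = Inc n i"
    by (auto simp: CycPF_def)
  have l: "length p = n" and sp: "set p \<subseteq> {1..n}" and pk: "park n p \<noteq> None"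
    using pf by (auto simp: is_parking_function_def parking_preferences_def)
  have p1: "\<forall>x\<in>set p. 1 \<le> x" using sp by auto
  have ff: "\<forall>t<n. first_free n (occI n i (Suc t)) (p!t) = Some (spotI n i (Suc t))"
    using cyc_char[OF i l p1] pk o by blast
  have "\<forall>t<n. p!t \<in> AI n i (Suc t)"
  proof (intro allI impI)
    fix t assume t: "t < n"
    then have "p!t \<in> set p" using l by simp
    then have "p!t \<in> {1..n}" using sp by blast
    then show "p!t \<in> AI n i (Suc t)" using ff t by (auto simp: AI_def)
  qed
  then show "p \<in> (\<Union>i\<in>{1..n}. CI n i)" using i l by (auto simp: CI_def)
next
  fix p assume "p \<in> (\<Union>i\<in>{1..n}. CI n i)"
  then obtain i where i: "1 \<le> i" "i \<le> n" and p: "p \<in> CI n i" by auto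
  then show "p \<in> CycPF n" using CI_outcome[OF i p] by (auto simp: CycPF_def)
qed

lemma Inc_0: "1 \<le> i \<Longrightarrow> i \<le> n \<Longrightarrow> Inc n i ! 0 = i"
  using Inc_nth[of i n 0] by (simp add: carI_def)

theorem corollary3p3:
  fixes n :: nat
  shows "card (CycPF n) = (\<Sum>i = 0..<n. fact i * fact (n - i))"
proof -
  have fin: "\<forall>i\<in>{1..n}. finite (CI n i)"
  proof
    fix i
    have "CI n i \<subseteq> {xs. set xs \<subseteq> {1..n} \<and> length xs = n}"
      by (auto simp: CI_def AI_def in_set_conv_nth)
    then show "finite (CI n i)" using finite_lists_length_eq[of "{1..n}" n]
      by (rule finite_subset) simp
  qed
  have disj: "\<forall>i\<in>{1..n}. \<forall>i'\<in>{1..n}. i \<noteq> i' \<longrightarrow> CI n i \<inter> CI n i' = {}"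
  proof (intro ballI impI)
    fix i i' assume i: "i \<in> {1..n}" and i': "i' \<in> {1..n}" and ne: "i \<noteq> i'"
    show "CI n i \<inter> CI n i' = {}"
    proof (rule ccontr)
      assume "CI n i \<inter> CI n i' \<noteq> {}"
      then obtain p where "p \<in> CI n i" "p \<in> CI n i'" by blast
      then have "Inc n i = Inc n i'" using CI_outcome[of i n p] CI_outcome[of i' n p] i i' by auto
      then have "Inc n i ! 0 = Inc n i' ! 0" by simp
      then show False using Inc_0[of i n] Inc_0[of i' n] i i' ne by auto
    qed
  qed
  have cardC: "card (CI n i) = fact (i - 1) * fact (Suc n - i)" if i: "1 \<le> i" "i \<le> n" for i
  proof -
    have "card (CI n i) = (\<Prod>t<n. card (AI n i (Suc t)))"
      unfolding CI_def by (rule card_lists)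
    also have "\<dots> = (\<Prod>t<n. (if Suc t < i then Suc t else Suc t - i + 1))"
      by (rule prod.cong) (use i card_AI[OF i] in auto)
    also have "\<dots> = fact (i - 1) * fact (Suc n - i)"
      by (rule prod_AI) (use i in auto)
    finally show ?thesis .
  qed
  have "card (CycPF n) = (\<Sum>i\<in>{1..n}. card (CI n i))"
    unfolding CycPF_UN by (rule card_UN_disjoint) (use fin disj in auto)
  also have "\<dots> = (\<Sum>i\<in>{1..n}. fact (i - 1) * fact (Suc n - i))"
    by (rule sum.cong) (auto simp: cardC)
  also have "\<dots> = (\<Sum>i\<in>Suc ` {0..<n}. fact (i - 1) * fact (Suc n - i))"
    by (simp add: image_Suc_atLeastLessThan atLeastLessThanSuc_atLeastAtMost)
  also have "\<dots> = (\<Sum>i = 0..<n. fact i * fact (n - i))"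
    by (subst sum.reindex) auto
  finally show ?thesis .
qed

end
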